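(* Let $\mathcal J$ be a generalized almost complex structure on a Courant algebroid $E$. (i) The endomorphism $\Pi_{\mathcal J}$ of $\Lambda^3E^*$ defined by $$(\Pi_{\mathcal J}\alpha)(u,v,w)=\tfrac14\big(\alpha(u,v,w)-\alpha(u,\mathcal Jv,\mathcal Jw)-\alpha(\mathcal Ju,v,\mathcal Jw)-\alpha(\mathcal Ju,\mathcal Jv,w)\big)$$ is a projector (i.e. $\Pi_{\mathcal J}^2=\Pi_{\mathcal J}$) with image the subbundle $\Lambda^3_{\mathcal J}E^*=\{\alpha\in\Lambda^3E^*:\alpha(\mathcal Ju,v,w)=\alpha(u,\mathcal Jv,w)=\alpha(u,v,\mathcal Jw)\ \forall u,v,w\}$. (ii) $\mathrm{im}\,\partial_{\mathcal J}=\ker\Pi_{\mathcal J}$.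
   Context: A Courant algebroid is a real vector bundle $E\to M$ with a nondegenerate symmetric bilinear form $\langle\cdot,\cdot\rangle$, a Dorfman bracket and an anchor satisfying the Courant algebroid axioms; only the bundle $E$ with $\langle\cdot,\cdot\rangle$ matters here. A generalized almost complex structure is a $\langle\cdot,\cdot\rangle$-orthogonal endomorphism $\mathcal J$ of $E$ with $\mathcal J^2=-\mathrm{Id}$. $\Lambda^{1,1}_{\mathcal J}E^*$ is the bundle of 2-forms $\beta$ on $E$ with $\beta(\mathcal Ju,\mathcal Jv)=\beta(u,v)$. Elements $\eta\in E^*\otimes\Lambda^{1,1}_{\mathcal J}E^*$ are written $\eta(u,v,w)$ (a 2-form in $(v,w)$ for each $u$), and $\partial_{\mathcal J}:E^*\otimes\Lambda^{1,1}_{\mathcal J}E^*\to\Lambda^3E^*$ is $(\partial_{\mathcal J}\eta)(u,v,w)=\eta(u,v,w)+\eta(w,u,v)+\eta(v,w,u)$. *)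

theory Defs
  imports "HOL-Analysis.Analysis"
begin

(* Fibrewise model: a fibre of E is a finite-dimensional real vector space 'a. *)

definition trilinear :: "('a::real_vector \<Rightarrow> 'a \<Rightarrow> 'a \<Rightarrow> real) \<Rightarrow> bool" where
  "trilinear \<alpha> \<longleftrightarrow>
     (\<forall>v w. linear (\<lambda>u. \<alpha> u v w)) \<and>
     (\<forall>u w. linear (\<lambda>v. \<alpha> u v w)) \<and>
     (\<forall>u v. linear (\<lambda>w. \<alpha> u v w))"

definition Lambda3 :: "('a::real_vector \<Rightarrow> 'a \<Rightarrow> 'a \<Rightarrow> real) set" where
  "Lambda3 = {\<alpha>. trilinear \<alpha> \<and>
                 (\<forall>u v w. \<alpha> v u w = - \<alpha> u v w) \<and>
                 (\<forall>u v w. \<alpha> u w v = - \<alpha> u v w)}"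

definition nondeg_sym_form :: "('a::real_vector \<Rightarrow> 'a \<Rightarrow> real) \<Rightarrow> bool" where
  "nondeg_sym_form g \<longleftrightarrow> bilinear g \<and> (\<forall>u v. g u v = g v u) \<and>
     (\<forall>u. (\<forall>v. g u v = 0) \<longrightarrow> u = 0)"

definition gen_almost_complex :: "('a::real_vector \<Rightarrow> 'a \<Rightarrow> real) \<Rightarrow> ('a \<Rightarrow> 'a) \<Rightarrow> bool" where
  "gen_almost_complex g J \<longleftrightarrow> linear J \<and> (\<forall>u v. g (J u) (J v) = g u v) \<and>
     (\<forall>u. J (J u) = - u)"

definition PiJ :: "('a \<Rightarrow> 'a) \<Rightarrow> ('a \<Rightarrow> 'a \<Rightarrow> 'a \<Rightarrow> real) \<Rightarrow> ('a \<Rightarrow> 'a \<Rightarrow> 'a \<Rightarrow> real)" where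
  "PiJ J \<alpha> = (\<lambda>u v w. (\<alpha> u v w - \<alpha> u (J v) (J w) - \<alpha> (J u) v (J w) - \<alpha> (J u) (J v) w) / 4)"

definition Lambda3_J :: "('a::real_vector \<Rightarrow> 'a) \<Rightarrow> ('a \<Rightarrow> 'a \<Rightarrow> 'a \<Rightarrow> real) set" where
  "Lambda3_J J = {\<alpha> \<in> Lambda3. \<forall>u v w. \<alpha> (J u) v w = \<alpha> u (J v) w \<and> \<alpha> u (J v) w = \<alpha> u v (J w)}"

(* E^* \<otimes> Lambda^{1,1}_J E^* : trilinear, alternating and J-invariant in the last two slots *)
definition E_Lambda11 :: "('a::real_vector \<Rightarrow> 'a) \<Rightarrow> ('a \<Rightarrow> 'a \<Rightarrow> 'a \<Rightarrow> real) set" where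
  "E_Lambda11 J = {\<eta>. trilinear \<eta> \<and> (\<forall>u v w. \<eta> u w v = - \<eta> u v w) \<and>
                      (\<forall>u v w. \<eta> u (J v) (J w) = \<eta> u v w)}"

definition dJ :: "('a \<Rightarrow> 'a \<Rightarrow> 'a \<Rightarrow> real) \<Rightarrow> ('a \<Rightarrow> 'a \<Rightarrow> 'a \<Rightarrow> real)" where
  "dJ \<eta> = (\<lambda>u v w. \<eta> u v w + \<eta> w u v + \<eta> v w u)"

end

theory Submission
  imports Defs
begin

lemma trilinear_iff:
  "trilinear \<alpha> \<longleftrightarrow>
    (\<forall>u u' v w. \<alpha> (u+u') v w = \<alpha> u v w + \<alpha> u' v w) \<and>
    (\<forall>c u v w. \<alpha> (c *\<^sub>R u) v w = c * \<alpha> u v w) \<and>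
    (\<forall>u v v' w. \<alpha> u (v+v') w = \<alpha> u v w + \<alpha> u v' w) \<and>
    (\<forall>c u v w. \<alpha> u (c *\<^sub>R v) w = c * \<alpha> u v w) \<and>
    (\<forall>u v w w'. \<alpha> u v (w+w') = \<alpha> u v w + \<alpha> u v w') \<and>
    (\<forall>c u v w. \<alpha> u v (c *\<^sub>R w) = c * \<alpha> u v w)"
  unfolding trilinear_def linear_iff by auto

lemma lin_J:
  assumes "linear J"
  shows "J (x + y) = J x + J y" "J (c *\<^sub>R x) = c *\<^sub>R J x"
  using assms by (auto simp: linear_iff)


lemma negs:
  fixes \<alpha> :: "'a::real_vector \<Rightarrow> 'a \<Rightarrow> 'a \<Rightarrow> real"
  assumes "trilinear \<alpha>"
  shows "\<alpha> (- u) v w = - \<alpha> u v w \<and> \<alpha> u (- v) w = - \<alpha> u v w \<and> \<alpha> u v (- w) = - \<alpha> u v w"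
proof -
  have "\<alpha> ((-1) *\<^sub>R u) v w = (-1) * \<alpha> u v w" "\<alpha> u ((-1) *\<^sub>R v) w = (-1) * \<alpha> u v w"
      "\<alpha> u v ((-1) *\<^sub>R w) = (-1) * \<alpha> u v w"
    using assms unfolding trilinear_iff by blast+
  then show ?thesis by simp
qed

lemma PiL:
  fixes \<alpha> :: "'a::real_vector \<Rightarrow> 'a \<Rightarrow> 'a \<Rightarrow> real"
  assumes linJ: "linear J" and JJ: "\<And>u. J (J u) = - u" and a: "\<alpha> \<in> Lambda3"
  shows "PiJ J \<alpha> \<in> Lambda3_J J"
proof -
  from a have tri: "trilinear \<alpha>" and s1: "\<And>u v w. \<alpha> v u w = - \<alpha> u v w"
    and s2: "\<And>u v w. \<alpha> u w v = - \<alpha> u v w" unfolding Lambda3_def by blast+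
  note n = negs[OF tri]
  note Jl = lin_J[OF linJ]
  have "trilinear (PiJ J \<alpha>)"
    using tri unfolding trilinear_iff PiJ_def by (simp add: Jl field_simps)
  moreover have "PiJ J \<alpha> v u w = - PiJ J \<alpha> u v w" for u v w
    unfolding PiJ_def using s1[of u v w] s1[of "J u" v "J w"] s1[of u "J v" "J w"] s1[of "J u" "J v" w]
    by (simp only: diff_divide_distrib minus_divide_left[symmetric])
  moreover have "PiJ J \<alpha> u w v = - PiJ J \<alpha> u v w" for u v w
    unfolding PiJ_def using s2[of u v w] s2[of u "J v" "J w"] s2[of "J u" v "J w"] s2[of "J u" "J v" w]
    by (simp only: diff_divide_distrib minus_divide_left[symmetric])
  moreover have "PiJ J \<alpha> (J u) v w = PiJ J \<alpha> u (J v) w" "PiJ J \<alpha> u (J v) w = PiJ J \<alpha> u v (J w)" for u v w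
    unfolding PiJ_def by (simp_all add: JJ n)
  ultimately show ?thesis unfolding Lambda3_J_def Lambda3_def by blast+
qed

lemma PiId:
  fixes \<alpha> :: "'a::real_vector \<Rightarrow> 'a \<Rightarrow> 'a \<Rightarrow> real"
  assumes JJ: "\<And>u. J (J u) = - u" and a: "\<alpha> \<in> Lambda3_J J"
  shows "PiJ J \<alpha> = \<alpha>"
proof -
  from a have tri: "trilinear \<alpha>" and c: "\<And>u v w. \<alpha> (J u) v w = \<alpha> u (J v) w"
    "\<And>u v w. \<alpha> u (J v) w = \<alpha> u v (J w)"
    unfolding Lambda3_J_def Lambda3_def by blast+
  note n = negs[OF tri]
  have "\<alpha> u (J v) (J w) = - \<alpha> u v w" "\<alpha> (J u) v (J w) = - \<alpha> u v w"
    "\<alpha> (J u) (J v) w = - \<alpha> u v w" for u v w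
    using c[of u "J v" w] c[of u v "J w"] c[of u "J v" "J w"] c[of u v w] c[of "J u" v w]
    by (simp_all add: JJ n)
  then show ?thesis unfolding PiJ_def by (auto simp: fun_eq_iff)
qed

lemma part3a:
  fixes \<eta> :: "'a::real_vector \<Rightarrow> 'a \<Rightarrow> 'a \<Rightarrow> real"
  assumes JJ: "\<And>u. J (J u) = - u" and e: "\<eta> \<in> E_Lambda11 J"
  shows "dJ \<eta> \<in> Lambda3 \<and> PiJ J (dJ \<eta>) = (\<lambda>u v w. 0)"
proof -
  from e have tri: "trilinear \<eta>" and s: "\<And>u v w. \<eta> u w v = - \<eta> u v w"
    and inv: "\<And>u v w. \<eta> u (J v) (J w) = \<eta> u v w"
    unfolding E_Lambda11_def by blast+
  note n = negs[OF tri]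
  have inv2: "\<eta> x (J y) z = - \<eta> x y (J z)" for x y z
    using inv[of x "J y" z] JJ n by simp
  have "trilinear (dJ \<eta>)"
    using tri unfolding trilinear_iff dJ_def by (simp add: field_simps)
  moreover have "dJ \<eta> v u w = - dJ \<eta> u v w" "dJ \<eta> u w v = - dJ \<eta> u v w" for u v w
    unfolding dJ_def using s[of v w u] s[of w u v] s[of u v w] by simp_all
  moreover have "PiJ J (dJ \<eta>) = (\<lambda>u v w. 0)"
    unfolding PiJ_def dJ_def by (simp add: fun_eq_iff inv inv2 JJ n)
  ultimately show ?thesis unfolding Lambda3_def by blast+
qed

lemma part3b:
  fixes \<alpha> :: "'a::real_vector \<Rightarrow> 'a \<Rightarrow> 'a \<Rightarrow> real"
  assumes linJ: "linear J" and JJ: "\<And>u. J (J u) = - u"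
    and a: "\<alpha> \<in> Lambda3" and p: "PiJ J \<alpha> = (\<lambda>u v w. 0)"
  shows "\<alpha> \<in> dJ ` E_Lambda11 J"
proof -
  from a have tri: "trilinear \<alpha>" and s1: "\<And>u v w. \<alpha> v u w = - \<alpha> u v w"
    and s2: "\<And>u v w. \<alpha> u w v = - \<alpha> u v w" unfolding Lambda3_def by blast+
  note n = negs[OF tri]
  note Jl = lin_J[OF linJ]
  have cyc: "\<alpha> w u v = \<alpha> u v w" for u v w
    using s1[of u w v] s2[of u v w] by simp
  define \<eta> where "\<eta> = (\<lambda>u v w. (\<alpha> u v w + \<alpha> u (J v) (J w)) / 4)"
  have "\<eta> \<in> E_Lambda11 J"
  proof -
    have "trilinear \<eta>"
      using tri unfolding trilinear_iff \<eta>_def by (simp add: Jl field_simps)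
    moreover have "\<eta> u w v = - \<eta> u v w" for u v w
      unfolding \<eta>_def using s2[of u v w] s2[of u "J v" "J w"] by (simp only: add_divide_distrib minus_divide_left[symmetric])
    moreover have "\<eta> u (J v) (J w) = \<eta> u v w" for u v w
      unfolding \<eta>_def by (simp add: JJ n algebra_simps)
    ultimately show ?thesis unfolding E_Lambda11_def by blast+
  qed
  moreover have "dJ \<eta> = \<alpha>"
  proof (intro ext)
    fix u v w
    have "PiJ J \<alpha> u v w = 0" using p by simp
    then have z: "\<alpha> u v w - \<alpha> u (J v) (J w) - \<alpha> (J u) v (J w) - \<alpha> (J u) (J v) w = 0"
      unfolding PiJ_def by simp
    have e: "\<alpha> w u v = \<alpha> u v w" "\<alpha> v w u = \<alpha> u v w" "\<alpha> w (J u) (J v) = \<alpha> (J u) (J v) w"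
       "\<alpha> v (J w) (J u) = \<alpha> (J u) v (J w)"
      by (metis cyc)+
    have "dJ \<eta> u v w = (3 * \<alpha> u v w + \<alpha> u (J v) (J w) + \<alpha> (J u) (J v) w + \<alpha> (J u) v (J w)) / 4"
      unfolding dJ_def \<eta>_def using e by (simp add: field_simps)
    then show "dJ \<eta> u v w = \<alpha> u v w" using z by simp
  qed
  ultimately show ?thesis by auto
qed

theorem lemma3p1:
  fixes g :: "'a::euclidean_space \<Rightarrow> 'a \<Rightarrow> real" and J :: "'a \<Rightarrow> 'a"
  assumes "nondeg_sym_form g" and "gen_almost_complex g J"
  shows "(\<forall>\<alpha>\<in>Lambda3. PiJ J (PiJ J \<alpha>) = PiJ J \<alpha>)
       \<and> PiJ J ` Lambda3 = Lambda3_J J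
       \<and> dJ ` E_Lambda11 J = {\<alpha> \<in> Lambda3. PiJ J \<alpha> = (\<lambda>u v w. 0)}"
proof -
  have linJ: "linear J" and JJ: "\<And>u. J (J u) = - u"
    using assms(2) unfolding gen_almost_complex_def by blast+
  have L3J: "Lambda3_J J \<subseteq> Lambda3" unfolding Lambda3_J_def by blast+
  have part1: "\<forall>\<alpha>\<in>Lambda3. PiJ J (PiJ J \<alpha>) = PiJ J \<alpha>"
    using PiL[OF linJ JJ] PiId[OF JJ] by blast
  have part2: "PiJ J ` Lambda3 = Lambda3_J J"
  proof
    show "PiJ J ` Lambda3 \<subseteq> Lambda3_J J" using PiL[OF linJ JJ] by blast
    show "Lambda3_J J \<subseteq> PiJ J ` Lambda3"
    proof
      fix \<alpha> assume h: "\<alpha> \<in> Lambda3_J J"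
      then have "\<alpha> = PiJ J \<alpha>" using PiId[OF JJ h] by simp
      moreover have "\<alpha> \<in> Lambda3" using h L3J by blast
      ultimately show "\<alpha> \<in> PiJ J ` Lambda3" by (rule image_eqI)
    qed
  qed
  have part3: "dJ ` E_Lambda11 J = {\<alpha> \<in> Lambda3. PiJ J \<alpha> = (\<lambda>u v w. 0)}"
  proof
    show "dJ ` E_Lambda11 J \<subseteq> {\<alpha> \<in> Lambda3. PiJ J \<alpha> = (\<lambda>u v w. 0)}"
      using part3a[OF JJ] by blast
    show "{\<alpha> \<in> Lambda3. PiJ J \<alpha> = (\<lambda>u v w. 0)} \<subseteq> dJ ` E_Lambda11 J"
      using part3b[OF linJ JJ] by blast
  qed
  show ?thesis using part1 part2 part3 by blast
qed

end
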